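(* Let $p$ be a prime, $n$ a natural number, and let $A$ be either a pre-Lie ring or a left brace of cardinality $p^n$ which is both left nilpotent and right nilpotent. Then $A^{[(n+1)^{n+1}]}=0$.
   Context: A (left) brace is a set $A$ with binary operations $+,\circ$ such that $(A,+)$ is an abelian group, $(A,\circ)$ is a group, and $a\circ(b+c)+a=a\circ b+a\circ c$; write $a*b=a\circ b-a-b$. A pre-Lie ring is an abelian group $(A,+)$ with a biadditive product $\cdot$ satisfying $(x\cdot y)\cdot z-x\cdot(y\cdot z)=(y\cdot x)\cdot z-y\cdot(x\cdot z)$. Let $\star$ denote $*$ for braces and $\cdot$ for pre-Lie rings; for additive subgroups $X,Y$, $X\star Y$ is the additive subgroup generated by $\{x\star y\}$. Set $A^1=A^{(1)}=A^{[1]}=A$, $A^{i+1}=A\star A^i$, $A^{(i+1)}=A^{(i)}\star A$, $A^{[i+1]}=\sum_{j=1}^{i}A^{[j]}\star A^{[i+1-j]}$. $A$ is left nilpotent if $A^m=0$ for some $m$, right nilpotent if $A^{(m)}=0$ for some $m$. *)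

theory Defs
  imports "HOL-Computational_Algebra.Primes"
begin

text \<open>The additive group (A,+) is the ambient type 'a :: ab_group_add (the whole type is A).\<close>

inductive_set add_span :: "'a::ab_group_add set \<Rightarrow> 'a set" for S where
  span_base: "x \<in> S \<Longrightarrow> x \<in> add_span S"
| span_zero: "0 \<in> add_span S"
| span_neg: "x \<in> add_span S \<Longrightarrow> - x \<in> add_span S"
| span_add: "x \<in> add_span S \<Longrightarrow> y \<in> add_span S \<Longrightarrow> x + y \<in> add_span S"

definition star_set :: "('a::ab_group_add \<Rightarrow> 'a \<Rightarrow> 'a) \<Rightarrow> 'a set \<Rightarrow> 'a set \<Rightarrow> 'a set" where
  "star_set op X Y = add_span {op x y | x y. x \<in> X \<and> y \<in> Y}"

text \<open>A^i (left powers), indexed from 1; index 0 is a dummy equal to A.\<close>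
fun left_pow :: "('a::ab_group_add \<Rightarrow> 'a \<Rightarrow> 'a) \<Rightarrow> nat \<Rightarrow> 'a set" where
  "left_pow op 0 = UNIV"
| "left_pow op (Suc 0) = UNIV"
| "left_pow op (Suc (Suc i)) = star_set op UNIV (left_pow op (Suc i))"

fun right_pow :: "('a::ab_group_add \<Rightarrow> 'a \<Rightarrow> 'a) \<Rightarrow> nat \<Rightarrow> 'a set" where
  "right_pow op 0 = UNIV"
| "right_pow op (Suc 0) = UNIV"
| "right_pow op (Suc (Suc i)) = star_set op (right_pow op (Suc i)) UNIV"

text \<open>A^[i]: A^[1] = A, A^[i+1] = sum over j=1..i of A^[j] \<star> A^[i+1-j].
  The sum of additive subgroups is the subgroup generated by their union.\<close>
function strong_pow :: "('a::ab_group_add \<Rightarrow> 'a \<Rightarrow> 'a) \<Rightarrow> nat \<Rightarrow> 'a set" where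
  "strong_pow op 0 = UNIV"
| "strong_pow op (Suc i) = (if i = 0 then UNIV else
     add_span (\<Union>j\<in>{1..i}. star_set op (strong_pow op j) (strong_pow op (Suc i - j))))"
  by pat_completeness auto
termination by (relation "measure (\<lambda>(_, i). i)") auto

definition left_nilpotent :: "('a::ab_group_add \<Rightarrow> 'a \<Rightarrow> 'a) \<Rightarrow> bool" where
  "left_nilpotent op \<longleftrightarrow> (\<exists>m. left_pow op m = {0})"

definition right_nilpotent :: "('a::ab_group_add \<Rightarrow> 'a \<Rightarrow> 'a) \<Rightarrow> bool" where
  "right_nilpotent op \<longleftrightarrow> (\<exists>m. right_pow op m = {0})"

definition pre_lie_ring :: "('a::ab_group_add \<Rightarrow> 'a \<Rightarrow> 'a) \<Rightarrow> bool" where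
  "pre_lie_ring pr \<longleftrightarrow>
     (\<forall>x y z. pr (x + y) z = pr x z + pr y z) \<and>
     (\<forall>x y z. pr x (y + z) = pr x y + pr x z) \<and>
     (\<forall>x y z. pr (pr x y) z - pr x (pr y z) = pr (pr y x) z - pr y (pr x z))"

definition brace :: "('a::ab_group_add \<Rightarrow> 'a \<Rightarrow> 'a) \<Rightarrow> bool" where
  "brace circ \<longleftrightarrow>
     (\<forall>a b c. circ (circ a b) c = circ a (circ b c)) \<and>
     (\<exists>e. (\<forall>a. circ e a = a \<and> circ a e = a) \<and> (\<forall>a. \<exists>b. circ a b = e \<and> circ b a = e)) \<and>
     (\<forall>a b c. circ a (b + c) + a = circ a b + circ a c)"

definition brace_star :: "('a::ab_group_add \<Rightarrow> 'a \<Rightarrow> 'a) \<Rightarrow> 'a \<Rightarrow> 'a \<Rightarrow> 'a" where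
  "brace_star circ a b = circ a b - a - b"

end

theory Submission imports Defs "HOL-Algebra.Coset" begin

definition sg :: "'a::ab_group_add set \<Rightarrow> bool" where
  "sg H \<longleftrightarrow> 0 \<in> H \<and> (\<forall>x\<in>H. - x \<in> H) \<and> (\<forall>x\<in>H. \<forall>y\<in>H. x + y \<in> H)"

lemma sg_card_dvd:
  fixes H :: "'a::ab_group_add set"
  assumes "sg H"
  shows "card H dvd card (UNIV :: 'a set)"
proof -
  let ?G = "\<lparr>carrier = (UNIV :: 'a set), monoid.mult = (+), one = 0\<rparr>"
  have g: "group ?G"
    by (rule groupI) (auto simp: add.assoc intro: exI[of _ "- x" for x])
  have inv: "inv\<^bsub>?G\<^esub> a = - a" for a
    using group.inv_equality[OF g, of "-a" a] by simp
  have "subgroup H ?G"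
    using assms unfolding sg_def
    by (intro group.subgroupI[OF g]) (auto simp: inv)
  from group.lagrange[OF g this] show ?thesis
    by (simp add: order_def) (metis dvd_triv_right)
qed

lemma sg_UNIV: "sg UNIV" by (simp add: sg_def)

lemma sg_diff: "sg H \<Longrightarrow> x \<in> H \<Longrightarrow> y \<in> H \<Longrightarrow> x - y \<in> H"
  unfolding sg_def by (metis diff_conv_add_uminus)

lemma sg_add_span: "sg (add_span S)"
  unfolding sg_def by (auto intro: add_span.intros)

lemma add_span_sub: assumes "sg H" "S \<subseteq> H" shows "add_span S \<subseteq> H"
proof
  fix x assume "x \<in> add_span S" then show "x \<in> H"
    by induction (use assms in \<open>auto simp: sg_def\<close>)
qed

lemma additive_zero: fixes f :: "'a::ab_group_add \<Rightarrow> 'b::ab_group_add"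
  shows "(\<And>x y. f (x + y) = f x + f y) \<Longrightarrow> f 0 = 0"
  by (metis add_cancel_left_right add_0)

lemma additive_neg: fixes f :: "'a::ab_group_add \<Rightarrow> 'b::ab_group_add"
  assumes "\<And>x y. f (x + y) = f x + f y" shows "f (- x) = - (f x)"
proof -
  have "f (- x) + f x = 0" using assms[of "-x" x] additive_zero[of f, OF assms] by simp
  then show ?thesis by (simp add: eq_neg_iff_add_eq_0)
qed

lemma add_span_map:
  assumes add: "\<And>x y. f (x + y) = f x + f y" and "sg H" and "\<And>x. x \<in> S \<Longrightarrow> f x \<in> H"
    and "x \<in> add_span S"
  shows "f x \<in> H"
  using assms(4)
proof induction
  case (span_zero) then show ?case using additive_zero[of f, OF add] \<open>sg H\<close> by (simp add: sg_def)
next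
  case (span_neg x) then show ?case using additive_neg[of f, OF add] \<open>sg H\<close> by (simp add: sg_def)
next
  case (span_add x y) then show ?case using add \<open>sg H\<close> by (simp add: sg_def)
qed (use assms in auto)

lemma star_set_sub: "sg H \<Longrightarrow> (\<And>x y. x \<in> X \<Longrightarrow> y \<in> Y \<Longrightarrow> op x y \<in> H) \<Longrightarrow> star_set op X Y \<subseteq> H"
  unfolding star_set_def by (rule add_span_sub) auto

lemma star_set_mem: "x \<in> X \<Longrightarrow> y \<in> Y \<Longrightarrow> op x y \<in> star_set op X Y"
  unfolding star_set_def by (rule span_base) blast

lemma sg_star_set: "sg (star_set op X Y)"
  unfolding star_set_def by (rule sg_add_span)

lemma star_set_mono: "X \<subseteq> X' \<Longrightarrow> Y \<subseteq> Y' \<Longrightarrow> star_set op X Y \<subseteq> star_set op X' Y'"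
  by (rule star_set_sub[OF sg_star_set]) (auto intro: star_set_mem)

lemma sg_left_pow: "sg (left_pow op i)"
  by (cases i; cases "i - 1") (auto simp: sg_UNIV sg_star_set)

lemma sg_right_pow: "sg (right_pow op i)"
  by (cases i; cases "i - 1") (auto simp: sg_UNIV sg_star_set)

lemma sg_strong_pow: "sg (strong_pow op i)"
  by (cases i) (auto simp: sg_UNIV sg_add_span)

lemma right_pow_dec: "right_pow op (Suc i) \<subseteq> right_pow op i"
proof -
  have "right_pow op (Suc (Suc i)) \<subseteq> right_pow op (Suc i)" for i
  proof (induction i)
    case (Suc i) then show ?case by (simp add: star_set_mono)
  qed simp
  then show ?thesis by (cases i) auto
qed

lemma left_pow_dec: "left_pow op (Suc i) \<subseteq> left_pow op i"
proof -
  have "left_pow op (Suc (Suc i)) \<subseteq> left_pow op (Suc i)" for i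
  proof (induction i)
    case (Suc i) then show ?case by (simp add: star_set_mono)
  qed simp
  then show ?thesis by (cases i) auto
qed

lemma chain_bound:
  fixes X :: "nat \<Rightarrow> 'a::ab_group_add set" and p n :: nat
  assumes p: "prime p" and card: "card (UNIV :: 'a set) = p ^ n"
    and X0: "X 0 = UNIV" and X1: "X (Suc 0) = UNIV" and sgX: "\<And>i. sg (X i)"
    and dec: "\<And>i. X (Suc i) \<subseteq> X i"
    and stab: "\<And>i. X (Suc (Suc i)) = X (Suc i) \<Longrightarrow> X (Suc (Suc (Suc i))) = X (Suc (Suc i))"
    and nil: "X m = {0}"
  shows "X (Suc n) = {0}"
proof -
  have p1: "p > 1" using p prime_gt_1_nat by blast
  have "card (UNIV :: 'a set) > 0" using card p1 by simp
  then have fin: "finite (UNIV :: 'a set)" by (rule card_ge_0_finite)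
  have finX: "finite (X i)" for i using fin by (rule finite_subset[rotated]) simp
  have pw: "\<exists>e. card (X i) = p ^ e" for i
  proof -
    have "card (X i) dvd p ^ n" using sg_card_dvd[OF sgX[of i]] card by simp
    then show ?thesis using divides_primepow_nat[OF p] by blast
  qed
  have anti: "i \<le> k \<Longrightarrow> X k \<subseteq> X i" for i k using lift_Suc_antimono_le[of X, OF dec] by blast
  have stab2: "X (Suc k + d) = X (Suc k)" if "X (Suc (Suc k)) = X (Suc k)" for k d
  proof -
    have "X (Suc (Suc k + d)) = X (Suc k + d)" for d
    proof (induction d)
      case 0 then show ?case using that by simp
    next
      case (Suc d) then show ?case using stab[of "k + d"] by simp
    qed
    then show ?thesis by (induction d) auto
  qed
  have z: "0 \<in> X i" for i using sgX by (simp add: sg_def)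
  have main: "card (X (Suc i)) \<le> p ^ (n - i)" for i
  proof (induction i)
    case 0 then show ?case using X1 card by simp
  next
    case (Suc i)
    show ?case
    proof (cases "X (Suc (Suc i)) = X (Suc i)")
      case True
      have "X (Suc (Suc i)) \<subseteq> {0}"
      proof (cases "Suc i \<le> m")
        case True': True
        have "X m = X (Suc i)" using stab2[OF True, of "m - Suc i"] True' by simp
        then show ?thesis using nil True by simp
      next
        case False
        then show ?thesis using anti[of m "Suc (Suc i)"] nil by simp
      qed
      then have "card (X (Suc (Suc i))) \<le> card {0::'a}" by (intro card_mono) auto
      then have "card (X (Suc (Suc i))) \<le> 1" by simp
      moreover have "1 \<le> p ^ (n - Suc i)" using p1 by simp
      ultimately show ?thesis by linarith
    next
      case False
      then have "X (Suc (Suc i)) \<subset> X (Suc i)" using dec by blast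
      then have lt: "card (X (Suc (Suc i))) < card (X (Suc i))" using finX psubset_card_mono by blast
      obtain e where e: "card (X (Suc (Suc i))) = p ^ e" using pw by blast
      obtain f where f: "card (X (Suc i)) = p ^ f" using pw by blast
      have "e < f" using lt e f p1 by (simp add: power_strict_increasing_iff)
      moreover have "f \<le> n - i" using Suc.IH f p1 by (simp add: power_increasing_iff)
      ultimately have "e \<le> n - Suc i" by linarith
      then show ?thesis using e p1 by (simp add: power_increasing)
    qed
  qed
  have "card (X (Suc n)) \<le> 1" using main[of n] by simp
  then show ?thesis using z[of "Suc n"] finX[of "Suc n"]
    using card_le_Suc0_iff_eq[OF finX[of "Suc n"]] by auto
qed


lemma prelie_ideal:
  assumes "pre_lie_ring pr"
  shows "w \<in> right_pow pr j \<Longrightarrow> pr a w \<in> right_pow pr j"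
proof -
  have add1: "pr (x + y) z = pr x z + pr y z" and add2: "pr x (y + z) = pr x y + pr x z"
    and pl: "pr (pr x y) z - pr x (pr y z) = pr (pr y x) z - pr y (pr x z)" for x y z
    using assms unfolding pre_lie_ring_def by blast+
  have idl: "pr a (pr w z) = pr (pr a w) z - pr (pr w a) z + pr w (pr a z)" for a w z
    using pl[of a w z] by (simp add: algebra_simps)
  have "\<forall>a w. w \<in> right_pow pr (Suc i) \<longrightarrow> pr a w \<in> right_pow pr (Suc i)" for i
  proof (induction i)
    case 0 then show ?case by simp
  next
    case (Suc i)
    show ?case
    proof (intro allI impI)
      fix a w assume w: "w \<in> right_pow pr (Suc (Suc i))"
      have "\<And>x. x \<in> {pr u z |u z. u \<in> right_pow pr (Suc i) \<and> z \<in> UNIV} \<Longrightarrow>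
            pr a x \<in> right_pow pr (Suc (Suc i))"
      proof -
        fix x assume "x \<in> {pr u z |u z. u \<in> right_pow pr (Suc i) \<and> z \<in> UNIV}"
        then obtain u z where x: "x = pr u z" and u: "u \<in> right_pow pr (Suc i)" by blast
        have 1: "pr (pr a u) z \<in> right_pow pr (Suc (Suc i))"
          using Suc.IH u by (simp add: star_set_mem)
        have "pr u a \<in> right_pow pr (Suc i)"
          using right_pow_dec[of pr "Suc i"] u star_set_mem[of u _ a UNIV pr] by auto
        then have 2: "pr (pr u a) z \<in> right_pow pr (Suc (Suc i))"
          by (simp add: star_set_mem)
        have 3: "pr u (pr a z) \<in> right_pow pr (Suc (Suc i))"
          using u by (simp add: star_set_mem)
        show "pr a x \<in> right_pow pr (Suc (Suc i))"
          unfolding x idl[of a u z] using 1 2 3 sg_right_pow[of pr "Suc (Suc i)"]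
          by (simp add: sg_def sg_diff)
      qed
      note gen = this
      have w': "w \<in> add_span {pr u z |u z. u \<in> right_pow pr (Suc i) \<and> z \<in> UNIV}"
        using w by (simp add: star_set_def)
      show "pr a w \<in> right_pow pr (Suc (Suc i))"
        by (rule add_span_map[of "pr a" "right_pow pr (Suc (Suc i))", OF add2 sg_right_pow gen w'])
    qed
  qed
  then show "w \<in> right_pow pr j \<Longrightarrow> pr a w \<in> right_pow pr j" by (cases j) auto
qed

lemma brace_ideal:
  assumes "brace circ"
  shows "w \<in> right_pow (brace_star circ) j \<Longrightarrow> brace_star circ a w \<in> right_pow (brace_star circ) j"
proof -
  define L where "L a x = circ a x - a" for a x
  define st where "st = brace_star circ"
  have assoc: "circ (circ a b) c = circ a (circ b c)" for a b c
    using assms unfolding brace_def by blast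
  obtain e where e: "\<And>a. circ e a = a \<and> circ a e = a" and inv: "\<And>a. \<exists>b. circ a b = e \<and> circ b a = e"
    using assms unfolding brace_def by blast
  have dist: "circ a (b + c) + a = circ a b + circ a c" for a b c
    using assms unfolding brace_def by blast
  have a0: "circ a 0 = a" for a using dist[of a 0 0] by simp
  have e0: "e = 0" using e[of 0] a0[of e] by simp
  have Ladd: "L a (x + y) = L a x + L a y" for a x y
    using dist[of a x y] unfolding L_def by (simp add: algebra_simps)
  have Lneg: "L a (- x) = - L a x" for a x using additive_neg[of "L a", OF Ladd] .
  have Ldiff: "L a (x - y) = L a x - L a y" for a x y
    using Ladd[of a x "-y"] Lneg by simp
  have Lcomp: "L (circ a b) c = L a (L b c)" for a b c
    unfolding L_def[of a] using Ldiff[of a "circ b c" b] by (simp add: L_def assoc)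
  have stL: "st a b = L a b - b" for a b by (simp add: st_def brace_star_def L_def)
  have stadd: "st a (x + y) = st a x + st a y" for a x y
    by (simp add: stL Ladd algebra_simps)
  have key1: "L a (st w c) = st (circ (circ a w) a') (L a c)" if a': "circ a' a = 0" for a a' w c
  proof -
    have "L a (st w c) = L (circ a w) c - L a c" by (simp add: stL Ldiff Lcomp)
    moreover have "circ (circ (circ a w) a') a = circ a w" using a' e0 e by (simp add: assoc)
    ultimately show ?thesis by (simp add: stL Lcomp[symmetric])
  qed
  have key2: "circ (circ a w) a' = L a (w + st w a')" if a': "circ a a' = 0" for a a' w
  proof -
    have "w + st w a' = circ w a' - a'" by (simp add: stL L_def)
    then have "L a (w + st w a') = L a (circ w a') - L a a'" by (simp add: Ldiff)
    also have "\<dots> = circ (circ a w) a'" using a' by (simp add: L_def assoc)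
    finally show ?thesis by simp
  qed
  have "\<forall>a w. w \<in> right_pow st (Suc i) \<longrightarrow> L a w \<in> right_pow st (Suc i)" for i
  proof (induction i)
    case 0 then show ?case by simp
  next
    case (Suc i)
    show ?case
    proof (intro allI impI)
      fix a w assume w: "w \<in> right_pow st (Suc (Suc i))"
      obtain a' where a'e: "circ a a' = e" "circ a' a = e" using inv[of a] by blast
      then have a': "circ a a' = 0" "circ a' a = 0" using e0 by simp_all
      have "\<And>x. x \<in> {st u z |u z. u \<in> right_pow st (Suc i) \<and> z \<in> UNIV} \<Longrightarrow>
            L a x \<in> right_pow st (Suc (Suc i))"
      proof -
        fix x assume "x \<in> {st u z |u z. u \<in> right_pow st (Suc i) \<and> z \<in> UNIV}"
        then obtain u z where x: "x = st u z" and u: "u \<in> right_pow st (Suc i)" by blast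
        have "st u a' \<in> right_pow st (Suc i)"
          using right_pow_dec[of st "Suc i"] u star_set_mem[of u _ a' UNIV st] by auto
        then have "u + st u a' \<in> right_pow st (Suc i)"
          using u sg_right_pow[of st "Suc i"] by (simp add: sg_def)
        then have "circ (circ a u) a' \<in> right_pow st (Suc i)"
          using Suc.IH key2[OF a'(1)] by simp
        then show "L a x \<in> right_pow st (Suc (Suc i))"
          unfolding x key1[OF a'(2)] by (simp add: star_set_mem)
      qed
      note gen = this
      have w': "w \<in> add_span {st u z |u z. u \<in> right_pow st (Suc i) \<and> z \<in> UNIV}"
        using w by (simp add: star_set_def)
      show "L a w \<in> right_pow st (Suc (Suc i))"
        by (rule add_span_map[of "L a" "right_pow st (Suc (Suc i))", OF Ladd sg_right_pow gen w'])
    qed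
  qed
  then have "w \<in> right_pow st j \<Longrightarrow> L a w \<in> right_pow st j" for j
    by (cases j) auto
  then show "w \<in> right_pow (brace_star circ) j \<Longrightarrow> brace_star circ a w \<in> right_pow (brace_star circ) j"
    using sg_right_pow[of st j] stL[of a w] unfolding st_def[symmetric] by (simp add: sg_diff)
qed


definition sumset :: "'a::ab_group_add set \<Rightarrow> 'a set \<Rightarrow> 'a set" where
  "sumset X Y = {x + y | x y. x \<in> X \<and> y \<in> Y}"

lemma sg_sumset: assumes "sg X" "sg Y" shows "sg (sumset X Y)"
  unfolding sg_def sumset_def
proof (intro conjI ballI)
  show "0 \<in> {x + y |x y. x \<in> X \<and> y \<in> Y}" using assms by (force simp: sg_def)
next
  fix z assume "z \<in> {x + y |x y. x \<in> X \<and> y \<in> Y}"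
  then obtain x y where "z = x + y" "x \<in> X" "y \<in> Y" by blast
  then show "- z \<in> {x + y |x y. x \<in> X \<and> y \<in> Y}" using assms
    by (intro CollectI exI[of _ "-x"] exI[of _ "-y"]) (auto simp: sg_def)
next
  fix z w assume "z \<in> {x + y |x y. x \<in> X \<and> y \<in> Y}" "w \<in> {x + y |x y. x \<in> X \<and> y \<in> Y}"
  then obtain x y x' y' where "z = x + y" "x \<in> X" "y \<in> Y" "w = x' + y'" "x' \<in> X" "y' \<in> Y" by blast
  then show "z + w \<in> {x + y |x y. x \<in> X \<and> y \<in> Y}" using assms
    by (intro CollectI exI[of _ "x + x'"] exI[of _ "y + y'"]) (auto simp: sg_def algebra_simps)
qed

lemma main_gen:
  fixes op :: "'a::ab_group_add \<Rightarrow> 'a \<Rightarrow> 'a" and n :: nat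
  assumes add2: "\<And>x y z. op x (y + z) = op x y + op x z"
    and lid: "\<And>j a w. w \<in> right_pow op j \<Longrightarrow> op a w \<in> right_pow op j"
    and ln: "left_pow op (Suc n) = {0}"
    and rn: "right_pow op (Suc n) = {0}"
  shows "strong_pow op ((n + 1) ^ (n + 1)) = {0}"
proof -
  have claim: "\<forall>m. (n + 1) ^ j \<le> m \<longrightarrow> strong_pow op m \<subseteq> right_pow op j" for j
  proof (induction j)
    case 0 then show ?case by simp
  next
    case (Suc j)
    show ?case
    proof (cases j)
      case 0 then show ?thesis by simp
    next
      case (Suc k)
      define G where "G = (n + 1) ^ j"
      have G1: "G \<ge> 1" by (simp add: G_def)
      have rpS: "right_pow op (Suc j) = star_set op (right_pow op j) UNIV" using Suc by simp
      have inner: "\<forall>m. q * G + 1 \<le> m \<longrightarrow>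
          strong_pow op m \<subseteq> sumset (right_pow op (Suc j)) (left_pow op (Suc q))" for q
      proof (induction q)
        case 0
        show ?case
        proof (intro allI impI subsetI)
          fix m x assume "x \<in> strong_pow op m"
          have "0 \<in> right_pow op (Suc j)" using sg_right_pow[of op "Suc j"] by (simp add: sg_def)
          then show "x \<in> sumset (right_pow op (Suc j)) (left_pow op (Suc 0))"
            unfolding sumset_def by force
        qed
      next
        case (Suc q)
        show ?case
        proof (intro allI impI)
          fix m assume m: "Suc q * G + 1 \<le> m"
          then obtain i where i: "m = Suc i" "i \<ge> 1" using G1
            by (metis One_nat_def Suc_le_D add.commute le_add1 mult_Suc order_trans add_le_mono1 not_less_eq_eq plus_1_eq_Suc)
          let ?T = "sumset (right_pow op (Suc j)) (left_pow op (Suc (Suc q)))"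
          have sgT: "sg ?T" by (intro sg_sumset sg_right_pow sg_left_pow)
          have z1: "0 \<in> right_pow op (Suc j)" using sg_right_pow[of op "Suc j"] by (simp add: sg_def)
          have z2: "0 \<in> left_pow op (Suc (Suc q))" using sg_left_pow[of op "Suc (Suc q)"] by (simp add: sg_def)
          have gen: "op x y \<in> ?T" if a: "a \<in> {1..i}" and x: "x \<in> strong_pow op a"
            and y: "y \<in> strong_pow op (Suc i - a)" for a x y
          proof (cases "G \<le> a")
            case True
            then have "x \<in> right_pow op j" using Suc.prems x \<open>\<forall>m. (n + 1) ^ j \<le> m \<longrightarrow> strong_pow op m \<subseteq> right_pow op j\<close>
              unfolding G_def by blast
            then have "op x y \<in> right_pow op (Suc j)" unfolding rpS by (simp add: star_set_mem)
            then show ?thesis unfolding sumset_def using z2 by force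
          next
            case False
            have "q * G + 1 \<le> Suc i - a" using False m i a by (simp add: algebra_simps)
            then have "y \<in> sumset (right_pow op (Suc j)) (left_pow op (Suc q))"
              using Suc.IH y by blast
            then obtain u v where uv: "y = u + v" "u \<in> right_pow op (Suc j)" "v \<in> left_pow op (Suc q)"
              unfolding sumset_def by blast
            have "op x u \<in> right_pow op (Suc j)" using lid uv(2) .
            moreover have "op x v \<in> left_pow op (Suc (Suc q))" using uv(3) by (simp add: star_set_mem)
            ultimately show ?thesis unfolding uv(1) add2 sumset_def by blast
          qed
          have "strong_pow op m = add_span (\<Union>a\<in>{1..i}. star_set op (strong_pow op a) (strong_pow op (Suc i - a)))"
            using i by simp
          also have "\<dots> \<subseteq> ?T"
          proof (rule add_span_sub[OF sgT], rule UN_least)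
            fix a assume "a \<in> {1..i}"
            then show "star_set op (strong_pow op a) (strong_pow op (Suc i - a)) \<subseteq> ?T"
              using gen by (intro star_set_sub[OF sgT]) blast
          qed
          finally show "strong_pow op m \<subseteq> ?T" .
        qed
      qed
      show ?thesis
      proof (intro allI impI)
        fix m assume m: "(n + 1) ^ Suc j \<le> m"
        have "(n + 1) ^ Suc j = G + n * G" by (simp add: G_def)
        then have "n * G + 1 \<le> m" using m G1 by linarith
        then have "strong_pow op m \<subseteq> sumset (right_pow op (Suc j)) (left_pow op (Suc n))"
          using inner by blast
        then show "strong_pow op m \<subseteq> right_pow op (Suc j)"
          unfolding ln sumset_def by auto
      qed
    qed
  qed
  have "strong_pow op ((n + 1) ^ (n + 1)) \<subseteq> {0}" using claim[of "n + 1"] rn by simp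
  moreover have "0 \<in> strong_pow op ((n + 1) ^ (n + 1))" using sg_strong_pow[of op "(n + 1) ^ (n + 1)"] by (simp add: sg_def)
  ultimately show ?thesis by blast
qed


lemma left_bound:
  fixes op :: "'a::ab_group_add \<Rightarrow> 'a \<Rightarrow> 'a" and p n :: nat
  assumes "prime p" "card (UNIV :: 'a set) = p ^ n" "left_nilpotent op"
  shows "left_pow op (Suc n) = {0}"
proof -
  obtain m where m: "left_pow op m = {0}" using assms(3) unfolding left_nilpotent_def by blast
  show ?thesis
  proof (rule chain_bound[OF assms(1,2), of "left_pow op", OF _ _ sg_left_pow left_pow_dec _ m])
    fix i assume h: "left_pow op (Suc (Suc i)) = left_pow op (Suc i)"
    have "left_pow op (Suc (Suc (Suc i))) = star_set op UNIV (left_pow op (Suc (Suc i)))" by simp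
    also have "\<dots> = star_set op UNIV (left_pow op (Suc i))" using h by simp
    also have "\<dots> = left_pow op (Suc (Suc i))" by simp
    finally show "left_pow op (Suc (Suc (Suc i))) = left_pow op (Suc (Suc i))" .
  qed simp_all
qed

lemma right_bound:
  fixes op :: "'a::ab_group_add \<Rightarrow> 'a \<Rightarrow> 'a" and p n :: nat
  assumes "prime p" "card (UNIV :: 'a set) = p ^ n" "right_nilpotent op"
  shows "right_pow op (Suc n) = {0}"
proof -
  obtain m where m: "right_pow op m = {0}" using assms(3) unfolding right_nilpotent_def by blast
  show ?thesis
  proof (rule chain_bound[OF assms(1,2), of "right_pow op", OF _ _ sg_right_pow right_pow_dec _ m])
    fix i assume h: "right_pow op (Suc (Suc i)) = right_pow op (Suc i)"
    have "right_pow op (Suc (Suc (Suc i))) = star_set op (right_pow op (Suc (Suc i))) UNIV" by simp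
    also have "\<dots> = star_set op (right_pow op (Suc i)) UNIV" using h by simp
    also have "\<dots> = right_pow op (Suc (Suc i))" by simp
    finally show "right_pow op (Suc (Suc (Suc i))) = right_pow op (Suc (Suc i))" .
  qed simp_all
qed

theorem corollary19:
  fixes p n :: nat
  assumes "prime p" and "card (UNIV :: 'a set) = p ^ n"
  shows "(\<forall>pr :: 'a::ab_group_add \<Rightarrow> 'a \<Rightarrow> 'a. pre_lie_ring pr \<and> left_nilpotent pr \<and> right_nilpotent pr
            \<longrightarrow> strong_pow pr ((n + 1) ^ (n + 1)) = {0})
       \<and> (\<forall>circ :: 'a \<Rightarrow> 'a \<Rightarrow> 'a. brace circ \<and> left_nilpotent (brace_star circ)
            \<and> right_nilpotent (brace_star circ)
            \<longrightarrow> strong_pow (brace_star circ) ((n + 1) ^ (n + 1)) = {0})"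
proof (intro conjI allI impI)
  fix pr :: "'a \<Rightarrow> 'a \<Rightarrow> 'a"
  assume h: "pre_lie_ring pr \<and> left_nilpotent pr \<and> right_nilpotent pr"
  show "strong_pow pr ((n + 1) ^ (n + 1)) = {0}"
  proof (rule main_gen)
    show "pr x (y + z) = pr x y + pr x z" for x y z using h unfolding pre_lie_ring_def by blast
    show "pr a w \<in> right_pow pr j" if "w \<in> right_pow pr j" for j a w
      using prelie_ideal h that by blast
    show "left_pow pr (Suc n) = {0}" using left_bound assms h by blast
    show "right_pow pr (Suc n) = {0}" using right_bound assms h by blast
  qed
next
  fix circ :: "'a \<Rightarrow> 'a \<Rightarrow> 'a"
  assume h: "brace circ \<and> left_nilpotent (brace_star circ) \<and> right_nilpotent (brace_star circ)"
  show "strong_pow (brace_star circ) ((n + 1) ^ (n + 1)) = {0}"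
  proof (rule main_gen)
    have d: "circ a (b + c) + a = circ a b + circ a c" for a b c using h unfolding brace_def by blast
    show "brace_star circ x (y + z) = brace_star circ x y + brace_star circ x z" for x y z
      using d[of x y z] unfolding brace_star_def by (simp add: algebra_simps)
    show "brace_star circ a w \<in> right_pow (brace_star circ) j" if "w \<in> right_pow (brace_star circ) j" for j a w
      using brace_ideal h that by blast
    show "left_pow (brace_star circ) (Suc n) = {0}" using left_bound assms h by blast
    show "right_pow (brace_star circ) (Suc n) = {0}" using right_bound assms h by blast
  qed
qed

end
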